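(* Assume $\delta=d$, $\gamma\ge1$ and $\alpha\le0$ (including $\alpha=-\infty$). Then $G_z(w)=\lim_{n\to\infty}d^{-n}\log^+|Q_z^n(w)|$ exists (as a value in $[0,+\infty]$) on $A_p\times\mathbb{C}$; it equals $+\infty$ on $A_f$ and $0$ on $B_f$.
   Context: Let $p(z)=z^d+O(z^{d-1})$ be a monic polynomial of degree $\delta=d\ge 2$, and let $q(z,w)=b(z)w^d+(\text{terms of lower degree in } w)$ be a polynomial with $\deg_w q=d$, where $b$ is a monic polynomial of degree $\gamma$. Let $f(z,w)=(p(z),q(z,w))$. Write $Q_z^n=q_{p^{n-1}(z)}\circ\cdots\circ q_{p(z)}\circ q_z$ with $q_z=q(z,\cdot)$, so $f^n(z,w)=(p^n(z),Q_z^n(w))$. Let $A_p=\{z: p^n(z)\to\infty\}$. Define $\alpha=\max\{(n_j-\gamma)/(d-m_j)\}$ over monomials $z^{n_j}w^{m_j}$ appearing in $q$ with nonzero coefficient and $m_j<d$, and $\alpha=-\infty$ if $q=b(z)w^d$. Let $W_R=\{(z,w):|z|>R,\ |w|>R|z|^\alpha\}$ (if $\alpha=-\infty$: $\{|z|>R,\ w\ne0\}$), fix $R>1$ large enough that $f(W_R)\subset W_R$ and $W_R\subset A_p\times\mathbb{C}$, and set $A_f=\bigcup_{n\ge0}f^{-n}(W_R)$, $B_f=(A_p\times\mathbb{C})\setminus A_f$. *)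

theory Defs
  imports "HOL-Analysis.Analysis" "HOL-Computational_Algebra.Polynomial" "HOL-Library.Extended_Real"
begin

text \<open>A polynomial q(z,w) in two variables is represented as a polynomial in w whose
  coefficients are polynomials in z (type complex poly poly).\<close>

definition qeval :: "complex poly poly \<Rightarrow> complex \<Rightarrow> complex \<Rightarrow> complex" where
  "qeval q z w = poly (map_poly (\<lambda>a. poly a z) q) w"

definition skew :: "complex poly \<Rightarrow> complex poly poly \<Rightarrow> complex \<times> complex \<Rightarrow> complex \<times> complex" where
  "skew p q = (\<lambda>(z, w). (poly p z, qeval q z w))"

fun Qiter :: "complex poly \<Rightarrow> complex poly poly \<Rightarrow> complex \<Rightarrow> nat \<Rightarrow> complex \<Rightarrow> complex" where
  "Qiter p q z 0 w = w"
| "Qiter p q z (Suc n) w = qeval q (((poly p) ^^ n) z) (Qiter p q z n w)"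

definition escA :: "complex poly \<Rightarrow> complex set" where
  "escA p = {z. filterlim (\<lambda>n. ((poly p) ^^ n) z) at_infinity sequentially}"

definition lowmonos :: "complex poly poly \<Rightarrow> (nat \<times> nat) set" where
  "lowmonos q = {(n, m). m < degree q \<and> coeff (coeff q m) n \<noteq> 0}"

definition alpha :: "complex poly poly \<Rightarrow> ereal" where
  "alpha q = (if lowmonos q = {} then -\<infinity>
     else Max ((\<lambda>(n, m). ereal ((real n - real (degree (lead_coeff q))) / (real (degree q) - real m)))
               ` lowmonos q))"

definition WR :: "complex poly poly \<Rightarrow> real \<Rightarrow> (complex \<times> complex) set" where
  "WR q R = (if alpha q = -\<infinity> then {(z, w). norm z > R \<and> w \<noteq> 0}
     else {(z, w). norm z > R \<and> norm w > R * norm z powr real_of_ereal (alpha q)})"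

definition Af :: "complex poly \<Rightarrow> complex poly poly \<Rightarrow> real \<Rightarrow> (complex \<times> complex) set" where
  "Af p q R = (\<Union>n. ((skew p q) ^^ n) -` WR q R)"

definition Bf :: "complex poly \<Rightarrow> complex poly poly \<Rightarrow> real \<Rightarrow> (complex \<times> complex) set" where
  "Bf p q R = (escA p \<times> UNIV) - Af p q R"

definition logplus :: "real \<Rightarrow> real" where
  "logplus x = (if x \<le> 1 then 0 else ln x)"

end

theory Submission
  imports Defs
begin
lemma poly_sum_le:
  fixes P :: "'a::comm_ring_1 poly"
  assumes "degree P \<le> N"
  shows "poly P x = (\<Sum>i\<le>N. coeff P i * x ^ i)"
proof -
  have "poly P x = (\<Sum>i\<le>degree P. coeff P i * x ^ i)" by (rule poly_altdef)
  also have "\<dots> = (\<Sum>i\<le>N. coeff P i * x ^ i)"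
    by (rule sum.mono_neutral_left) (use assms in \<open>auto simp: coeff_eq_0\<close>)
  finally show ?thesis .
qed
lemma monic_lower:
  fixes P :: "complex poly"
  assumes "lead_coeff P = 1"
  shows "\<exists>M\<ge>1. \<forall>z. M \<le> norm z \<longrightarrow> norm z ^ degree P / 2 \<le> norm (poly P z)"
proof (cases "degree P")
  case 0
  then have "P = [:1:]" using assms by (metis leading_coeff_0_iff degree_0_id one_neq_zero pCons_0_0 one_pCons)
  then show ?thesis
    by (intro exI[of _ 1]) auto
next
  case (Suc k)
  define S where "S = (\<Sum>i\<le>k. norm (coeff P i))"
  have S0: "S \<ge> 0" unfolding S_def by (auto intro: sum_nonneg)
  show ?thesis
  proof (intro exI[of _ "2*S+1"] conjI allI impI)
    show "1 \<le> 2*S+1" using S0 by simp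
    fix z :: complex assume z: "2*S+1 \<le> norm z"
    have z1: "1 \<le> norm z" using z S0 by simp
    have "poly P z = (\<Sum>i\<le>Suc k. coeff P i * z ^ i)"
      using Suc by (simp add: poly_altdef)
    also have "\<dots> = (\<Sum>i\<le>k. coeff P i * z ^ i) + z ^ Suc k"
      using assms Suc by simp
    finally have eq: "poly P z = (\<Sum>i\<le>k. coeff P i * z ^ i) + z ^ Suc k" .
    have A: "norm (\<Sum>i\<le>k. coeff P i * z ^ i) \<le> S * norm z ^ k"
    proof -
      have "norm (\<Sum>i\<le>k. coeff P i * z ^ i) \<le> (\<Sum>i\<le>k. norm (coeff P i) * norm z ^ k)"
        apply (rule order_trans[OF norm_sum], rule sum_mono)
        apply (simp add: norm_mult norm_power)
        apply (rule mult_left_mono, rule power_increasing) using z1 by auto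
      also have "\<dots> = S * norm z ^ k" by (simp add: S_def sum_distrib_right)
      finally show ?thesis .
    qed
    have B: "S * norm z ^ k \<le> norm z ^ Suc k / 2"
    proof -
      have "S * norm z ^ k \<le> (norm z / 2) * norm z ^ k"
        by (rule mult_right_mono) (use z in auto)
      thus ?thesis by simp
    qed
    have C: "norm (z ^ Suc k) - norm (\<Sum>i\<le>k. coeff P i * z ^ i) \<le> norm (poly P z)"
      unfolding eq using norm_triangle_ineq2[of "z ^ Suc k" "- (\<Sum>i\<le>k. coeff P i * z ^ i)"]
      by (simp add: add.commute)
    show "norm z ^ degree P / 2 \<le> norm (poly P z)" using Suc A B C by (simp add: norm_power norm_mult)
  qed
qed
lemma real_term_bound:
  fixes R x y a :: real and n m D g :: nat
  assumes R1: "1 \<le> R" and Rx: "R < x" and y: "R * x powr a < y"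
    and na: "(real n - real g) / (real D - real m) \<le> a" and mD: "m < D"
  shows "x ^ n * y ^ m * R \<le> x ^ g * y ^ D"
proof -
  have x0: "x > 0" "x \<ge> 1" using R1 Rx by auto
  have pa: "x powr a > 0" using x0 by simp
  have y0: "y > 0" using y R1 pa by (smt (verit) mult_pos_pos)
  define k where "k = D - m"
  have k1: "k \<ge> 1" using mD k_def by simp
  have Dk: "D = m + k" using mD k_def by simp
  have na': "real n - real g \<le> a * real k"
    using na mD k_def by (simp add: divide_le_eq of_nat_diff mult.commute)
  have "y ^ k \<ge> (R * x powr a) ^ k"
    by (rule power_mono) (use y R1 pa in auto)
  also have "(R * x powr a) ^ k = R ^ k * x powr (a * real k)"
    using x0 by (simp add: power_mult_distrib powr_realpow[symmetric] powr_powr)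
  also have "R ^ k \<ge> R" using R1 k1
    by (metis power_one_right power_increasing)
  hence "R ^ k * x powr (a * real k) \<ge> R * x powr (real n - real g)"
    apply (rule mult_mono) using x0 na' R1 by (auto intro: powr_mono)
  finally have key: "R * x powr (real n - real g) \<le> y ^ k" .
  have "x ^ n * y ^ m * R = x powr real g * y ^ m * (R * x powr (real n - real g))"
    using x0 by (simp add: powr_realpow[symmetric] powr_diff field_simps)
  also have "\<dots> \<le> x powr real g * y ^ m * y ^ k"
    by (rule mult_left_mono[OF key]) (use x0 y0 in auto)
  also have "\<dots> = x ^ g * y ^ D" using x0 by (simp add: Dk power_add powr_realpow)
  finally show ?thesis .
qed
lemma qeval_split:
  "qeval q z w = (\<Sum>m<degree q. poly (coeff q m) z * w ^ m) + poly (lead_coeff q) z * w ^ degree q"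
proof -
  have "qeval q z w = (\<Sum>m\<le>degree q. coeff (map_poly (\<lambda>a. poly a z) q) m * w ^ m)"
    unfolding qeval_def by (rule poly_sum_le) (rule map_poly_degree_leq)
  also have "\<dots> = (\<Sum>m\<le>degree q. poly (coeff q m) z * w ^ m)"
    by (simp add: coeff_map_poly)
  also have "\<dots> = (\<Sum>m<degree q. poly (coeff q m) z * w ^ m) + poly (lead_coeff q) z * w ^ degree q"
    by (simp add: lessThan_Suc_atMost[symmetric])
  finally show ?thesis .
qed

lemma WR_w_nonzero:
  assumes "(z, w) \<in> WR q R" "R \<ge> 1"
  shows "w \<noteq> 0" "norm z > R"
  using assms by (auto simp: WR_def split: if_splits)
    (smt (verit) norm_zero powr_gt_zero mult_pos_pos)

lemma q_lower:
  fixes q :: "complex poly poly"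
  assumes lead: "lead_coeff (lead_coeff q) = 1" and al: "alpha q \<le> 0"
  shows "\<exists>M\<ge>1. \<forall>R z w. M \<le> R \<longrightarrow> (z, w) \<in> WR q R \<longrightarrow>
     norm z ^ degree (lead_coeff q) * norm w ^ degree q / 4 \<le> norm (qeval q z w)"
proof -
  define b where "b = lead_coeff q"
  define d where "d = degree q"
  define g where "g = degree b"
  obtain Mb where Mb: "Mb \<ge> 1" "\<And>z. Mb \<le> norm z \<Longrightarrow> norm z ^ g / 2 \<le> norm (poly b z)"
    using monic_lower[of b] lead unfolding b_def g_def by auto
  define S where "S = (\<Sum>m<d. \<Sum>n\<le>degree (coeff q m). norm (coeff (coeff q m) n))"
  have S0: "S \<ge> 0" unfolding S_def by (auto intro!: sum_nonneg)
  show ?thesis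
  proof (intro exI[of _ "max Mb (4*S+1)"] conjI allI impI)
    show "1 \<le> max Mb (4*S+1)" using Mb by simp
    fix R z w assume R: "max Mb (4*S+1) \<le> R" and W: "(z, w) \<in> WR q R"
    have R1: "R \<ge> 1" using R Mb by simp
    have zR: "norm z > R" and w0: "w \<noteq> 0" using WR_w_nonzero[OF W R1] by auto
    define X where "X = norm z ^ g * norm w ^ d"
    have X0: "X \<ge> 0" unfolding X_def by simp
    have tb: "norm (coeff (coeff q m) n * z ^ n * w ^ m) \<le> norm (coeff (coeff q m) n) * (X / R)"
      if m: "m < d" for m n
    proof (cases "coeff (coeff q m) n = 0")
      case True then show ?thesis by simp
    next
      case False
      hence mono: "(n, m) \<in> lowmonos q" using m unfolding lowmonos_def d_def by auto
      hence ne: "lowmonos q \<noteq> {}" by auto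
      have fin: "finite (lowmonos q)"
      proof (rule finite_subset)
        show "lowmonos q \<subseteq> {..Max (insert 0 ((\<lambda>m. degree (coeff q m)) ` {..<degree q}))} \<times> {..<degree q}"
        proof
          fix x assume x: "x \<in> lowmonos q"
          then obtain n' m' where x': "x = (n', m')" "m' < degree q" "coeff (coeff q m') n' \<noteq> 0"
            unfolding lowmonos_def by auto
          have "n' \<le> degree (coeff q m')" using x'(3) le_degree by blast
          also have "\<dots> \<le> Max (insert 0 ((\<lambda>m. degree (coeff q m)) ` {..<degree q}))"
            using x'(2) by (intro Max_ge) auto
          finally show "x \<in> {..Max (insert 0 ((\<lambda>m. degree (coeff q m)) ` {..<degree q}))} \<times> {..<degree q}"
            using x' by auto
        qed
      qed auto
      define a where "a = real_of_ereal (alpha q)"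
      have le: "ereal ((real n - real g) / (real d - real m)) \<le> alpha q"
        unfolding alpha_def using ne fin mono
        by (auto simp: b_def g_def d_def intro!: Max_ge)
      have afin: "alpha q = ereal a"
        using le al unfolding a_def by (cases "alpha q") auto
      have W': "R * norm z powr a < norm w"
        using W afin unfolding WR_def by auto
      have "norm z ^ n * norm w ^ m * R \<le> norm z ^ g * norm w ^ d"
        by (rule real_term_bound[OF R1 zR W' _ m]) (use le afin in auto)
      hence "norm z ^ n * norm w ^ m \<le> X / R" using R1 unfolding X_def
        by (simp add: le_divide_eq)
      hence "norm (coeff (coeff q m) n) * (norm z ^ n * norm w ^ m) \<le> norm (coeff (coeff q m) n) * (X / R)"
        by (rule mult_left_mono) simp
      thus ?thesis by (simp add: norm_mult norm_power mult.assoc)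
    qed
    have low: "norm (\<Sum>m<d. poly (coeff q m) z * w ^ m) \<le> S * (X / R)"
    proof -
      have "norm (\<Sum>m<d. poly (coeff q m) z * w ^ m)
          = norm (\<Sum>m<d. \<Sum>n\<le>degree (coeff q m). coeff (coeff q m) n * z ^ n * w ^ m)"
        by (simp add: poly_altdef sum_distrib_right)
      also have "\<dots> \<le> (\<Sum>m<d. \<Sum>n\<le>degree (coeff q m). norm (coeff (coeff q m) n) * (X / R))"
        by (rule order_trans[OF norm_sum], rule sum_mono, rule order_trans[OF norm_sum],
            rule sum_mono, rule tb) auto
      also have "\<dots> = S * (X / R)" unfolding S_def by (simp add: sum_distrib_right sum_divide_distrib)
      finally show ?thesis .
    qed
    have "S * (X / R) \<le> X / 4"
    proof -
      have "S * (X / R) = (S / R) * X" by simp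
      also have "\<dots> \<le> (1/4) * X"
        by (rule mult_right_mono) (use R S0 X0 in \<open>auto simp: divide_le_eq\<close>)
      finally show ?thesis by simp
    qed
    have top: "X / 2 \<le> norm (poly b z * w ^ d)"
    proof -
      have "norm z ^ g / 2 \<le> norm (poly b z)" using Mb(2)[of z] zR R by auto
      hence "norm z ^ g / 2 * norm w ^ d \<le> norm (poly b z) * norm w ^ d"
        by (rule mult_right_mono) simp
      thus ?thesis unfolding X_def by (simp add: norm_mult norm_power)
    qed
    have eq: "qeval q z w = (\<Sum>m<d. poly (coeff q m) z * w ^ m) + poly b z * w ^ d"
      unfolding b_def d_def by (rule qeval_split)
    have "norm (poly b z * w ^ d) - norm (\<Sum>m<d. poly (coeff q m) z * w ^ m) \<le> norm (qeval q z w)"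
      unfolding eq using norm_triangle_ineq2[of "poly b z * w ^ d" "- (\<Sum>m<d. poly (coeff q m) z * w ^ m)"]
      by (simp add: add.commute)
    then show "norm z ^ degree (lead_coeff q) * norm w ^ degree q / 4 \<le> norm (qeval q z w)"
      using low top \<open>S * (X / R) \<le> X / 4\<close> unfolding X_def b_def d_def g_def by linarith
  qed
qed
lemma skew_iter: "(skew p q ^^ k) (z, w) = ((poly p ^^ k) z, Qiter p q z k w)"
  by (induction k) (auto simp: skew_def)

lemma logplus_nonneg: "logplus x \<ge> 0"
  unfolding logplus_def by auto

lemma logplus_ge_ln: "x > 0 \<Longrightarrow> ln x \<le> logplus x"
  unfolding logplus_def by auto

lemma logplus_mono: "x \<le> y \<Longrightarrow> logplus x \<le> logplus y"
  unfolding logplus_def by auto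

lemma WR_orbit:
  assumes inv: "skew p q ` WR q R \<subseteq> WR q R"
    and W: "(skew p q ^^ n) (z, w) \<in> WR q R"
  shows "((poly p ^^ (n + j)) z, Qiter p q z (n + j) w) \<in> WR q R"
proof (induction j)
  case 0 then show ?case using W by (simp add: skew_iter)
next
  case (Suc j)
  have "skew p q ((poly p ^^ (n + j)) z, Qiter p q z (n + j) w) \<in> WR q R"
    using inv Suc by blast
  then show ?case by (simp add: skew_def)
qed
lemma growth:
  fixes p :: "complex poly" and q :: "complex poly poly" and d :: nat
  assumes d2: "d \<ge> 2" and degp: "degree p = d" and degq: "degree q = d"
    and g1: "degree (lead_coeff q) \<ge> 1"
    and Mp: "\<And>z. Mp \<le> norm z \<Longrightarrow> norm z ^ d / 2 \<le> norm (poly p z)"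
    and Mq: "\<And>z w. (z, w) \<in> WR q R \<Longrightarrow>
        norm z ^ degree (lead_coeff q) * norm w ^ d / 4 \<le> norm (qeval q z w)"
    and R: "R \<ge> Mp" "R \<ge> exp 3" "R \<ge> 1"
    and inv: "skew p q ` WR q R \<subseteq> WR q R"
    and W: "(skew p q ^^ n) (z, w) \<in> WR q R"
  shows "(\<lambda>k. ereal (logplus (norm (Qiter p q z k w)) / real d ^ k)) \<longlonglongrightarrow> \<infinity>"
proof -
  define g where "g = degree (lead_coeff q)"
  define zk where "zk j = (poly p ^^ (n + j)) z" for j
  define wk where "wk j = Qiter p q z (n + j) w" for j
  have inW: "(zk j, wk j) \<in> WR q R" for j
    unfolding zk_def wk_def by (rule WR_orbit[OF inv W])
  have zR: "norm (zk j) > R" and w0: "wk j \<noteq> 0" for j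
    using WR_w_nonzero[OF inW R(3)] by auto
  have zsuc: "zk (Suc j) = poly p (zk j)" for j unfolding zk_def by simp
  have wsuc: "wk (Suc j) = qeval q (zk j) (wk j)" for j unfolding wk_def zk_def by simp
  define l where "l j = ln (norm (zk j))" for j
  define L where "L j = ln (norm (wk j))" for j
  have zpos: "norm (zk j) > 0" for j using zR[of j] R(3) by linarith
  have wpos: "norm (wk j) > 0" for j using w0[of j] by simp
  have l_ge: "l j \<ge> 2 + real d ^ j" for j
  proof (induction j)
    case 0
    have "ln (exp 3) \<le> ln (norm (zk 0))" using zR[of 0] R by (intro ln_mono) auto
    then show ?case by (simp add: l_def)
  next
    case (Suc j)
    have "norm (zk j) ^ d / 2 \<le> norm (zk (Suc j))" using Mp[of "zk j"] zR[of j] R zsuc by auto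
    hence "ln (norm (zk j) ^ d / 2) \<le> l (Suc j)" unfolding l_def
      using zpos[of j] by (intro ln_mono) auto
    moreover have "ln (norm (zk j) ^ d / 2) = real d * l j - ln 2"
      using zpos[of j] by (simp add: ln_div ln_realpow l_def)
    moreover have "real d * l j \<ge> real d * (2 + real d ^ j)"
      using Suc by (intro mult_left_mono) auto
    moreover have "ln (2::real) \<le> 1" using ln_2_less_1 by simp
    moreover have "real d * (2 + real d ^ j) = 2 * real d + real d ^ Suc j" by (simp add: algebra_simps)
    moreover have "real d \<ge> 2" using d2 by simp
    ultimately show ?case by linarith
  qed
  have L_step: "L (Suc j) \<ge> real d * L j + real d ^ j" for j
  proof -
    have "norm (zk j) ^ g * norm (wk j) ^ d / 4 \<le> norm (wk (Suc j))"
      using Mq[OF inW[of j]] wsuc g_def by simp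
    hence "ln (norm (zk j) ^ g * norm (wk j) ^ d / 4) \<le> L (Suc j)" unfolding L_def
      using zpos[of j] wpos[of j] by (intro ln_mono) auto
    moreover have "ln (norm (zk j) ^ g * norm (wk j) ^ d / 4) = real g * l j + real d * L j - ln 4"
      using zpos[of j] wpos[of j] by (simp add: ln_div ln_mult ln_realpow l_def L_def)
    moreover have "real g * l j \<ge> l j"
    proof -
      have "0 \<le> l j" using l_ge[of j] by (smt (verit) zero_le_power of_nat_0_le_iff)
      moreover have "1 \<le> real g" using g1 g_def by simp
      ultimately show ?thesis using mult_right_mono[of 1 "real g" "l j"] by simp
    qed
    moreover have "ln (4::real) \<le> 2"
    proof -
      have "ln (4::real) = 2 * ln 2" using ln_realpow[of 2 2] by simp
      thus ?thesis using ln_2_less_1 by simp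
    qed
    ultimately show ?thesis using l_ge[of j] by linarith
  qed
  have L_ge: "L j \<ge> real d ^ j * (L 0 + real j / real d)" for j
  proof (induction j)
    case 0 then show ?case by simp
  next
    case (Suc j)
    have dpos: "real d > 0" using d2 by simp
    have "real d * L j \<ge> real d * (real d ^ j * (L 0 + real j / real d))"
      using Suc dpos by (intro mult_left_mono) auto
    moreover have "real d * (real d ^ j * (L 0 + real j / real d)) + real d ^ j
        = real d ^ Suc j * (L 0 + real (Suc j) / real d)"
      using dpos by (simp add: field_simps)
    ultimately show ?case using L_step[of j] by linarith
  qed
  define h where "h k = logplus (norm (Qiter p q z k w)) / real d ^ k" for k
  have dpos: "real d > 0" using d2 by simp
  have hb: "h (j + n) \<ge> L 0 / real d ^ n + real j * (1 / (real d * real d ^ n))" for j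
  proof -
    have "L j \<le> logplus (norm (wk j))" unfolding L_def by (rule logplus_ge_ln[OF wpos])
    hence "real d ^ j * (L 0 + real j / real d) \<le> logplus (norm (wk j))" using L_ge[of j] by linarith
    hence "real d ^ j * (L 0 + real j / real d) / real d ^ (n + j) \<le> h (j + n)"
      unfolding h_def wk_def by (simp add: add.commute divide_right_mono)
    moreover have "real d ^ j * (L 0 + real j / real d) / real d ^ (n + j)
        = L 0 / real d ^ n + real j * (1 / (real d * real d ^ n))"
      using dpos by (simp add: power_add field_simps)
    ultimately show ?thesis by simp
  qed
  have lim: "filterlim (\<lambda>j. L 0 / real d ^ n + real j * (1 / (real d * real d ^ n))) at_top sequentially"
  proof (rule filterlim_tendsto_add_at_top[OF tendsto_const])
    show "filterlim (\<lambda>j. real j * (1 / (real d * real d ^ n))) at_top sequentially"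
      by (rule filterlim_at_top_mult_tendsto_pos[OF tendsto_const])
        (use dpos in \<open>auto intro: filterlim_real_sequentially\<close>)
  qed
  have "filterlim (\<lambda>j. h (j + n)) at_top sequentially"
    by (rule filterlim_at_top_mono[OF lim]) (use hb in auto)
  hence "(\<lambda>j. ereal (h (j + n))) \<longlonglongrightarrow> \<infinity>" by (simp add: tendsto_PInfty_eq_at_top)
  hence "(\<lambda>k. ereal (h k)) \<longlonglongrightarrow> \<infinity>" by (rule LIMSEQ_offset)
  thus ?thesis unfolding h_def .
qed
lemma bounded_case:
  fixes p :: "complex poly" and q :: "complex poly poly" and d :: nat
  assumes d2: "d \<ge> 2" and al: "alpha q \<le> 0" and R1: "R \<ge> 1"
    and esc: "z \<in> escA p"
    and notW: "\<And>n. (skew p q ^^ n) (z, w) \<notin> WR q R"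
  shows "(\<lambda>k. ereal (logplus (norm (Qiter p q z k w)) / real d ^ k)) \<longlonglongrightarrow> 0"
proof -
  have "filterlim (\<lambda>n. norm ((poly p ^^ n) z)) at_top sequentially"
    using esc unfolding escA_def by (intro filterlim_at_infinity_imp_norm_at_top) simp
  hence ev: "eventually (\<lambda>n. norm ((poly p ^^ n) z) > R) sequentially"
    by (simp add: filterlim_at_top_dense)
  have bnd: "norm (Qiter p q z n w) \<le> R" if zn: "norm ((poly p ^^ n) z) > R" for n
  proof -
    have nW: "((poly p ^^ n) z, Qiter p q z n w) \<notin> WR q R"
      using notW[of n] by (simp add: skew_iter)
    show ?thesis
    proof (cases "alpha q = -\<infinity>")
      case True
      then show ?thesis using nW zn R1 unfolding WR_def by auto
    next
      case False
      define a where "a = real_of_ereal (alpha q)"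
      have afin: "alpha q = ereal a" using False al unfolding a_def by (cases "alpha q") auto
      have a0: "a \<le> 0" using al afin by simp
      have le: "norm (Qiter p q z n w) \<le> R * norm ((poly p ^^ n) z) powr a"
        using nW zn False afin unfolding WR_def by auto
      have "norm ((poly p ^^ n) z) powr a \<le> norm ((poly p ^^ n) z) powr 0"
        using zn R1 a0 by (intro powr_mono) auto
      also have "\<dots> = 1"
      proof -
        have "norm ((poly p ^^ n) z) \<noteq> 0" using zn R1 by linarith
        thus ?thesis by simp
      qed
      finally have "R * norm ((poly p ^^ n) z) powr a \<le> R * 1"
        using R1 by (intro mult_left_mono) auto
      then show ?thesis using le by simp
    qed
  qed
  have dpos: "real d > 1" using d2 by simp
  have lim0: "(\<lambda>k. logplus R * inverse (real d ^ k)) \<longlonglongrightarrow> 0"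
    by (rule tendsto_mult_right_zero) (rule LIMSEQ_inverse_realpow_zero[OF dpos])
  have "(\<lambda>k. logplus (norm (Qiter p q z k w)) / real d ^ k) \<longlonglongrightarrow> 0"
  proof (rule tendsto_sandwich[OF _ _ tendsto_const lim0])
    show "eventually (\<lambda>k. 0 \<le> logplus (norm (Qiter p q z k w)) / real d ^ k) sequentially"
      by (intro always_eventually allI divide_nonneg_nonneg logplus_nonneg) auto
    show "eventually (\<lambda>k. logplus (norm (Qiter p q z k w)) / real d ^ k
        \<le> logplus R * inverse (real d ^ k)) sequentially"
      using ev
    proof (rule eventually_mono)
      fix k assume "norm ((poly p ^^ k) z) > R"
      hence "logplus (norm (Qiter p q z k w)) \<le> logplus R" by (intro logplus_mono bnd)
      thus "logplus (norm (Qiter p q z k w)) / real d ^ k \<le> logplus R * inverse (real d ^ k)"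
        using dpos by (simp add: divide_right_mono divide_inverse[symmetric])
    qed
  qed
  hence "(\<lambda>k. ereal (logplus (norm (Qiter p q z k w)) / real d ^ k)) \<longlonglongrightarrow> ereal 0"
    by (rule tendsto_ereal)
  thus ?thesis by (simp add: zero_ereal_def)
qed
theorem theorem6p7:
  fixes p :: "complex poly" and q :: "complex poly poly" and d :: nat
  assumes "d \<ge> 2"
    and "degree p = d" and "lead_coeff p = 1"
    and "degree q = d"
    and "lead_coeff (lead_coeff q) = 1"
    and "degree (lead_coeff q) \<ge> 1"
    and "alpha q \<le> 0"
  shows "\<exists>R0>1. \<forall>R\<ge>R0.
           skew p q ` WR q R \<subseteq> WR q R \<longrightarrow> WR q R \<subseteq> escA p \<times> UNIV \<longrightarrow>
           (\<forall>z w. (z, w) \<in> escA p \<times> UNIV \<longrightarrow>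
              (\<exists>G :: ereal. (\<lambda>n. ereal (logplus (norm (Qiter p q z n w)) / real d ^ n)) \<longlonglongrightarrow> G)) \<and>
           (\<forall>z w. (z, w) \<in> Af p q R \<longrightarrow>
              (\<lambda>n. ereal (logplus (norm (Qiter p q z n w)) / real d ^ n)) \<longlonglongrightarrow> \<infinity>) \<and>
           (\<forall>z w. (z, w) \<in> Bf p q R \<longrightarrow>
              (\<lambda>n. ereal (logplus (norm (Qiter p q z n w)) / real d ^ n)) \<longlonglongrightarrow> 0)"
proof -
  obtain Mp where Mp: "Mp \<ge> 1" "\<And>z. Mp \<le> norm z \<Longrightarrow> norm z ^ degree p / 2 \<le> norm (poly p z)"
    using monic_lower[of p] assms(3) by auto
  obtain Mq where Mq: "Mq \<ge> 1" "\<And>R z w. Mq \<le> R \<Longrightarrow> (z, w) \<in> WR q R \<Longrightarrow>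
     norm z ^ degree (lead_coeff q) * norm w ^ degree q / 4 \<le> norm (qeval q z w)"
    using q_lower[OF assms(5) assms(7)] by blast
  define R0 where "R0 = max (max Mp Mq) (exp 3)"
  have "exp (0::real) < exp 3" by simp
  hence e3: "exp (3::real) > 1" by simp
  have AB: "((z, w) \<in> Af p q R \<longrightarrow> (\<lambda>n. ereal (logplus (norm (Qiter p q z n w)) / real d ^ n)) \<longlonglongrightarrow> \<infinity>)
      \<and> ((z, w) \<in> Bf p q R \<longrightarrow> (\<lambda>n. ereal (logplus (norm (Qiter p q z n w)) / real d ^ n)) \<longlonglongrightarrow> 0)"
    if R: "R0 \<le> R" and inv: "skew p q ` WR q R \<subseteq> WR q R" for R and z w :: complex
  proof (intro conjI impI)
    have R1: "R \<ge> 1" "R \<ge> Mp" "R \<ge> Mq" "R \<ge> exp 3" using R e3 Mp(1) unfolding R0_def by auto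
    show "(\<lambda>n. ereal (logplus (norm (Qiter p q z n w)) / real d ^ n)) \<longlonglongrightarrow> \<infinity>"
      if "(z, w) \<in> Af p q R"
    proof -
      from that obtain n where n: "(skew p q ^^ n) (z, w) \<in> WR q R" unfolding Af_def by auto
      show ?thesis
        by (rule growth[OF assms(1) assms(2) assms(4) assms(6) _ _ R1(2) R1(4) R1(1) inv n])
          (use Mp(2) assms(2) Mq(2)[OF R1(3)] assms(4) in auto)
    qed
    show "(\<lambda>n. ereal (logplus (norm (Qiter p q z n w)) / real d ^ n)) \<longlonglongrightarrow> 0"
      if "(z, w) \<in> Bf p q R"
    proof -
      have z: "z \<in> escA p" and nA: "(z, w) \<notin> Af p q R" using that unfolding Bf_def by auto
      show ?thesis
        by (rule bounded_case[OF assms(1) assms(7) R1(1) z]) (use nA in \<open>auto simp: Af_def\<close>)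
    qed
  qed
  show ?thesis
  proof (intro exI[of _ R0] conjI allI impI)
    show "R0 > 1" unfolding R0_def using e3 by (simp add: less_max_iff_disj)
  next
    fix R and z w :: complex
    assume R: "R0 \<le> R" and inv: "skew p q ` WR q R \<subseteq> WR q R" and zw: "(z, w) \<in> escA p \<times> UNIV"
    show "\<exists>G :: ereal. (\<lambda>n. ereal (logplus (norm (Qiter p q z n w)) / real d ^ n)) \<longlonglongrightarrow> G"
    proof (cases "(z, w) \<in> Af p q R")
      case True then show ?thesis using AB[OF R inv] by blast
    next
      case False
      hence "(z, w) \<in> Bf p q R" using zw unfolding Bf_def by auto
      then show ?thesis using AB[OF R inv] by blast
    qed
  next
    fix R and z w :: complex
    assume R: "R0 \<le> R" and inv: "skew p q ` WR q R \<subseteq> WR q R" and "(z, w) \<in> Af p q R"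
    then show "(\<lambda>n. ereal (logplus (norm (Qiter p q z n w)) / real d ^ n)) \<longlonglongrightarrow> \<infinity>"
      using AB[OF R inv] by blast
  next
    fix R and z w :: complex
    assume R: "R0 \<le> R" and inv: "skew p q ` WR q R \<subseteq> WR q R" and "(z, w) \<in> Bf p q R"
    then show "(\<lambda>n. ereal (logplus (norm (Qiter p q z n w)) / real d ^ n)) \<longlonglongrightarrow> 0"
      using AB[OF R inv] by blast
  qed
qed
end
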